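(* Let $P$ be a disjunctive program and let $P_1,P_2,\dots$ be any module sequence for $P$ (induced by any enumeration of $GH$). Then: (1) $\bigcup_{i\ge 1}P_i=\mathsf{Ground}(P)$; (2) for each $i\ge 1$ and each $j\ge i$, $\mathit{atom}(P_i)$ is a splitting set of $P_j$ and $P_i=bot_{\mathit{atom}(P_i)}(P_j)$; (3) for each $i\ge 1$, $\mathit{atom}(P_i)$ is a splitting set of $P$ and $P_i=bot_{\mathit{atom}(P_i)}(P)$; (4) for each $i\ge 1$, $P_i$ is downward closed.
   Context: A disjunctive program is a set of rules $A_1\vee\dots\vee A_m\leftarrow L_1,\dots,L_n$ ($m>0$, $n\ge 0$) where the $A_j$ are atoms and each $L_i$ is an atom $A$ or a negated atom $\mathtt{not}\,A$, over a first-order language possibly containing function symbols. For a rule $r$, $head(r)=\{A_1,\dots,A_m\}$. $\mathsf{Ground}(P)$ is the set of ground instances of rules of $P$ over the Herbrand universe; for a set $X$ of ground rules, $\mathit{atom}(X)$ is the set of ground atoms occurring in $X$, and $\mathit{atom}(r)$ the set of atoms of a ground rule $r$. The dependency graph of $P$ has the ground atoms as vertices and an edge from $A$ to $B$ whenever, for some $r\in\mathsf{Ground}(P)$, $A\in head(r)$ and $B$ occurs in $r$ (positively or negatively in the body, or in the head). $A$ depends on $B$ if there is a directed path from $A$ to $B$ in this graph; every atom depends on itself. $GH=\{p\mid p\in head(r), r\in\mathsf{Ground}(P)\}$. Given an enumeration $p_1,p_2,\dots$ of $GH$, the induced module sequence is $P_1=\{r\in\mathsf{Ground}(P)\mid p_1\text{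 depends on some }A\in head(r)\}$ and $P_{i+1}=P_i\cup\{r\in\mathsf{Ground}(P)\mid p_{i+1}\text{ depends on some }A\in head(r)\}$. For a set $Q$ of ground rules (for a non-ground $P$, take $Q=\mathsf{Ground}(P)$), a splitting set of $Q$ is a set $U$ of ground atoms such that for every $r\in Q$, if $head(r)\cap U\ne\emptyset$ then $\mathit{atom}(r)\subseteq U$; then $bot_U(Q)=\{r\in Q\mid head(r)\cap U\neq\emptyset\}$. A subprogram $P'\subseteq\mathsf{Ground}(P)$ is downward closed if for each atom $A\in\mathit{atom}(P')$, $P'$ contains every $r\in\mathsf{Ground}(P)$ with $A\in head(r)$. *)

theory Defs
  imports Main
begin

datatype ('f, 'v) trm = Var 'v | Fn 'f "('f, 'v) trm list"

datatype ('p, 'f, 'v) atom = Atom 'p "('f, 'v) trm list"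

datatype ('p, 'f, 'v) literal = Pos "('p, 'f, 'v) atom" | Neg "('p, 'f, 'v) atom"

text \<open>A rule  A1 v ... v Am <- L1, ..., Ln.\<close>
datatype ('p, 'f, 'v) rule = Rule (heads: "('p, 'f, 'v) atom list") (body: "('p, 'f, 'v) literal list")

definition disj_program :: "('p, 'f, 'v) rule set \<Rightarrow> bool" where
  "disj_program P \<longleftrightarrow> (\<forall>r\<in>P. heads r \<noteq> [])"

fun lit_atom :: "('p, 'f, 'v) literal \<Rightarrow> ('p, 'f, 'v) atom" where
  "lit_atom (Pos a) = a"
| "lit_atom (Neg a) = a"

definition head :: "('p, 'f, 'v) rule \<Rightarrow> ('p, 'f, 'v) atom set" where
  "head r = set (heads r)"

definition atoms_rule :: "('p, 'f, 'v) rule \<Rightarrow> ('p, 'f, 'v) atom set" where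
  "atoms_rule r = set (heads r) \<union> lit_atom ` set (body r)"

definition atoms :: "('p, 'f, 'v) rule set \<Rightarrow> ('p, 'f, 'v) atom set" where
  "atoms X = (\<Union>r\<in>X. atoms_rule r)"

fun vars_trm :: "('f, 'v) trm \<Rightarrow> 'v set" where
  "vars_trm (Var x) = {x}"
| "vars_trm (Fn f ts) = (\<Union>t\<in>set ts. vars_trm t)"

fun subst_trm :: "('v \<Rightarrow> ('f, 'v) trm) \<Rightarrow> ('f, 'v) trm \<Rightarrow> ('f, 'v) trm" where
  "subst_trm \<sigma> (Var x) = \<sigma> x"
| "subst_trm \<sigma> (Fn f ts) = Fn f (map (subst_trm \<sigma>) ts)"

fun subst_atom :: "('v \<Rightarrow> ('f, 'v) trm) \<Rightarrow> ('p, 'f, 'v) atom \<Rightarrow> ('p, 'f, 'v) atom" where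
  "subst_atom \<sigma> (Atom q ts) = Atom q (map (subst_trm \<sigma>) ts)"

fun subst_lit :: "('v \<Rightarrow> ('f, 'v) trm) \<Rightarrow> ('p, 'f, 'v) literal \<Rightarrow> ('p, 'f, 'v) literal" where
  "subst_lit \<sigma> (Pos a) = Pos (subst_atom \<sigma> a)"
| "subst_lit \<sigma> (Neg a) = Neg (subst_atom \<sigma> a)"

fun subst_rule :: "('v \<Rightarrow> ('f, 'v) trm) \<Rightarrow> ('p, 'f, 'v) rule \<Rightarrow> ('p, 'f, 'v) rule" where
  "subst_rule \<sigma> (Rule hs bs) = Rule (map (subst_atom \<sigma>) hs) (map (subst_lit \<sigma>) bs)"

definition ground_subst :: "('v \<Rightarrow> ('f, 'v) trm) \<Rightarrow> bool" where
  "ground_subst \<sigma> \<longleftrightarrow> (\<forall>x. vars_trm (\<sigma> x) = {})"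

definition Ground :: "('p, 'f, 'v) rule set \<Rightarrow> ('p, 'f, 'v) rule set" where
  "Ground P = {subst_rule \<sigma> r | \<sigma> r. r \<in> P \<and> ground_subst \<sigma>}"

definition dep_edge :: "('p, 'f, 'v) rule set \<Rightarrow> ('p, 'f, 'v) atom \<Rightarrow> ('p, 'f, 'v) atom \<Rightarrow> bool" where
  "dep_edge P A B \<longleftrightarrow> (\<exists>r\<in>Ground P. A \<in> head r \<and> B \<in> atoms_rule r)"

definition depends :: "('p, 'f, 'v) rule set \<Rightarrow> ('p, 'f, 'v) atom \<Rightarrow> ('p, 'f, 'v) atom \<Rightarrow> bool" where
  "depends P A B \<longleftrightarrow> (dep_edge P)\<^sup>*\<^sup>* A B"

definition GH :: "('p, 'f, 'v) rule set \<Rightarrow> ('p, 'f, 'v) atom set" where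
  "GH P = {q. \<exists>r\<in>Ground P. q \<in> head r}"

text \<open>Module sequence induced by an enumeration p_1, p_2, ... (indices from 1; index 0 gives the empty set).\<close>
primrec module_seq :: "('p, 'f, 'v) rule set \<Rightarrow> (nat \<Rightarrow> ('p, 'f, 'v) atom) \<Rightarrow> nat \<Rightarrow> ('p, 'f, 'v) rule set" where
  "module_seq P p 0 = {}"
| "module_seq P p (Suc i) =
     module_seq P p i \<union> {r \<in> Ground P. \<exists>A\<in>head r. depends P (p (Suc i)) A}"

definition splitting_set :: "('p, 'f, 'v) atom set \<Rightarrow> ('p, 'f, 'v) rule set \<Rightarrow> bool" where
  "splitting_set U Q \<longleftrightarrow> (\<forall>r\<in>Q. head r \<inter> U \<noteq> {} \<longrightarrow> atoms_rule r \<subseteq> U)"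

definition bot :: "('p, 'f, 'v) atom set \<Rightarrow> ('p, 'f, 'v) rule set \<Rightarrow> ('p, 'f, 'v) rule set" where
  "bot U Q = {r \<in> Q. head r \<inter> U \<noteq> {}}"

definition downward_closed :: "('p, 'f, 'v) rule set \<Rightarrow> ('p, 'f, 'v) rule set \<Rightarrow> bool" where
  "downward_closed P P' \<longleftrightarrow>
     P' \<subseteq> Ground P \<and> (\<forall>A\<in>atoms P'. \<forall>r\<in>Ground P. A \<in> head r \<longrightarrow> r \<in> P')"

end

theory Submission
  imports Defs
begin
definition DD :: "('p, 'f, 'v) rule set \<Rightarrow> (nat \<Rightarrow> ('p, 'f, 'v) atom) \<Rightarrow> nat \<Rightarrow> ('p, 'f, 'v) atom set" where
  "DD P p i = {A. \<exists>k\<in>{1..i}. depends P (p k) A}"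

lemma DD_Suc: "DD P p (Suc i) = DD P p i \<union> {A. depends P (p (Suc i)) A}"
  unfolding DD_def by (auto simp: le_Suc_eq) (metis atLeastAtMost_iff le_refl Suc_le_mono le0)

lemma ms_char: "module_seq P p i = {r\<in>Ground P. head r \<inter> DD P p i \<noteq> {}}"
proof (induction i)
  case 0 then show ?case by (simp add: DD_def)
next
  case (Suc i)
  show ?case
    unfolding module_seq.simps Suc DD_Suc by blast
qed
lemma ms_atoms: "atoms (module_seq P p i) \<subseteq> DD P p i"
proof
  fix B assume "B \<in> atoms (module_seq P p i)"
  then obtain r where r: "r \<in> Ground P" "head r \<inter> DD P p i \<noteq> {}" "B \<in> atoms_rule r"
    by (auto simp: atoms_def ms_char)
  then obtain A k where "A \<in> head r" "k \<in> {1..i}" "depends P (p k) A" unfolding DD_def by blast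
  moreover have "dep_edge P A B" using r \<open>A \<in> head r\<close> by (auto simp: dep_edge_def)
  ultimately have "depends P (p k) B" unfolding depends_def by (meson rtranclp.rtrancl_into_rtrancl)
  with \<open>k \<in> {1..i}\<close> show "B \<in> DD P p i" by (auto simp: DD_def)
qed

lemma head_sub: "head r \<subseteq> atoms_rule r" by (auto simp: head_def atoms_rule_def)

lemma ms_mono: "i \<le> j \<Longrightarrow> module_seq P p i \<subseteq> module_seq P p j"
  by (induction j) (auto simp: le_Suc_eq)

lemma ms_bot: "module_seq P p i = bot (atoms (module_seq P p i)) (Ground P)"
proof -
  have "r \<in> module_seq P p i" if "r \<in> Ground P" "head r \<inter> atoms (module_seq P p i) \<noteq> {}" for r
    using that ms_atoms[of P p i] by (auto simp: ms_char)
  moreover have "head r \<inter> atoms (module_seq P p i) \<noteq> {}" if "r \<in> module_seq P p i" for r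
  proof -
    from that have "head r \<noteq> {}" by (auto simp: ms_char)
    moreover have "head r \<subseteq> atoms (module_seq P p i)"
      using that head_sub[of r] by (auto simp: atoms_def)
    ultimately show ?thesis by blast
  qed
  moreover have "module_seq P p i \<subseteq> Ground P" by (auto simp: ms_char)
  ultimately show ?thesis by (auto simp: bot_def)
qed

lemma ms_split: "splitting_set (atoms (module_seq P p i)) (Ground P)"
  unfolding splitting_set_def
proof (intro ballI impI)
  fix r assume "r \<in> Ground P" "head r \<inter> atoms (module_seq P p i) \<noteq> {}"
  then have "r \<in> module_seq P p i" using ms_bot[of P p i] by (auto simp: bot_def)
  then show "atoms_rule r \<subseteq> atoms (module_seq P p i)" by (auto simp: atoms_def)
qed

lemma heads_subst: "heads r \<noteq> [] \<Longrightarrow> heads (subst_rule \<sigma> r) \<noteq> []"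
  by (cases r) auto

theorem proposition3p2:
  fixes P :: "('p, 'f, 'v) rule set"
    and p :: "nat \<Rightarrow> ('p, 'f, 'v) atom"
  assumes prog: "disj_program P"
    and enum: "p ` {1..} = GH P"
  shows "((\<Union>i\<in>{1..}. module_seq P p i) = Ground P)
    \<and> (\<forall>i\<ge>1. \<forall>j\<ge>i. splitting_set (atoms (module_seq P p i)) (module_seq P p j)
                        \<and> module_seq P p i = bot (atoms (module_seq P p i)) (module_seq P p j))
    \<and> (\<forall>i\<ge>1. splitting_set (atoms (module_seq P p i)) (Ground P)
                \<and> module_seq P p i = bot (atoms (module_seq P p i)) (Ground P))
    \<and> (\<forall>i\<ge>1. downward_closed P (module_seq P p i))"
proof (intro conjI allI impI)
  have sub: "\<And>i. module_seq P p i \<subseteq> Ground P" by (auto simp: ms_char)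
  show "(\<Union>i\<in>{1..}. module_seq P p i) = Ground P"
  proof
    show "(\<Union>i\<in>{1..}. module_seq P p i) \<subseteq> Ground P" using sub by blast
    show "Ground P \<subseteq> (\<Union>i\<in>{1..}. module_seq P p i)"
    proof
      fix r assume r: "r \<in> Ground P"
      then obtain \<sigma> r0 where "r = subst_rule \<sigma> r0" "r0 \<in> P" by (auto simp: Ground_def)
      with prog have "heads r \<noteq> []" using heads_subst by (auto simp: disj_program_def)
      then obtain A where A: "A \<in> head r" by (cases "heads r") (auto simp: head_def)
      then have "A \<in> GH P" using r by (auto simp: GH_def)
      with enum obtain k where k: "k \<ge> 1" "p k = A" by (metis atLeast_iff imageE)
      have "depends P (p k) A" using k by (simp add: depends_def)
      then have "A \<in> DD P p k" using k unfolding DD_def by auto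
      then have "r \<in> module_seq P p k" using r A unfolding ms_char by blast
      then show "r \<in> (\<Union>i\<in>{1..}. module_seq P p i)" using k by auto
    qed
  qed
  fix i
  show "splitting_set (atoms (module_seq P p i)) (Ground P)" by (rule ms_split)
  show "module_seq P p i = bot (atoms (module_seq P p i)) (Ground P)" by (rule ms_bot)
  show "downward_closed P (module_seq P p i)"
    unfolding downward_closed_def
  proof (intro conjI ballI impI)
    show "module_seq P p i \<subseteq> Ground P" by (rule sub)
    fix A r assume "A \<in> atoms (module_seq P p i)" "r \<in> Ground P" "A \<in> head r"
    then show "r \<in> module_seq P p i" using ms_atoms[of P p i] by (auto simp: ms_char)
  qed
  fix j assume "i \<le> j"
  then have m: "module_seq P p i \<subseteq> module_seq P p j" by (rule ms_mono)
  show "splitting_set (atoms (module_seq P p i)) (module_seq P p j)"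
    using ms_split[of P p i] sub[of j] by (auto simp: splitting_set_def)
  show "module_seq P p i = bot (atoms (module_seq P p i)) (module_seq P p j)"
    using ms_bot[of P p i] sub[of j] m by (auto simp: bot_def)
qed

end
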